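(* Let $m\ge 2$, let $\varepsilon \le \frac{1}{2^{3m}\cdot 4m}$ be a power of 2, let $0<\tau<1$, and let $\mathcal{G} = \{2^{-i}\varepsilon j : i \in \mathbb{Z},\ j \in \{1,\dots,2/\varepsilon^2 - 1\}\} \cap (0,1)$. Consider the following rounding procedure applied to a value $x \in [0,1]$: while $x \ge \tau$, let $y$ be the largest element of $\mathcal{G}$ with $y \le x$, output $y$ as a new state and replace $x$ by $x-y$; when $x<\tau$, output the remaining $x$ as a final state. If this procedure is applied to each state of a discrete distribution $p_i$ with at most $n$ states (replacing each state by the multiset of outputs), then the resulting distribution has at most $n\lceil 1 + \log_2(1/\tau)\rceil$ states.
   Context: Logarithms are base 2. *)

theory Defs
  imports Complex_Main "HOL-Library.Multiset"
begin

definition grid :: "real \<Rightarrow> real set" where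
  "grid eps = {2 powr (- real_of_int i) * eps * real j | i j.
                 1 \<le> j \<and> real j \<le> 2 / eps^2 - 1} \<inter> {0<..<1}"

inductive rounding :: "real set \<Rightarrow> real \<Rightarrow> real \<Rightarrow> real list \<Rightarrow> bool"
  for G :: "real set" and tau :: real where
  stop: "x < tau \<Longrightarrow> rounding G tau x [x]"
| step: "tau \<le> x \<Longrightarrow> y = (GREATEST y. y \<in> G \<and> y \<le> x) \<Longrightarrow>
         rounding G tau (x - y) ys \<Longrightarrow> rounding G tau x (y # ys)"

end

theory Submission
  imports Defs
begin

lemma grid_memI:
  assumes "y = 2 powr (- real_of_int i) * eps * real j" "1 \<le> j" "real j \<le> 2 / eps^2 - 1"
    "0 < y" "y < 1"
  shows "y \<in> grid eps"
  unfolding grid_def using assms by (intro IntI CollectI) (auto intro!: exI[of _ i] exI[of _ j])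

lemma grid_finite:
  assumes eps: "0 < eps" and w: "0 < w"
  shows "finite {y \<in> grid eps. w \<le> y}"
proof -
  define k0 where "k0 = \<lfloor>log 2 eps\<rfloor>"
  define i1 where "i1 = \<lceil>- log 2 (w * eps / 2)\<rceil>"
  define J where "J = nat \<lfloor>2 / eps^2\<rfloor>"
  have "{y \<in> grid eps. w \<le> y} \<subseteq>
     (\<lambda>(i,j). 2 powr (- real_of_int i) * eps * real j) ` ({k0..i1} \<times> {..J})"
  proof
    fix y assume "y \<in> {y \<in> grid eps. w \<le> y}"
    then obtain i j where y: "y = 2 powr (- real_of_int i) * eps * real j" and j1: "1 \<le> j"
      and jb: "real j \<le> 2 / eps^2 - 1" and y1: "y < 1" and wy: "w \<le> y"
      unfolding grid_def by auto
    have p: "0 < 2 powr (- real_of_int i)" by simp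
    have "2 powr (- real_of_int i) * eps * 1 \<le> y"
      unfolding y using j1 p eps by (intro mult_left_mono) auto
    hence a: "2 powr (- real_of_int i) * eps \<le> 1" using y1 by simp
    have "log 2 (2 powr (- real_of_int i) * eps) \<le> 0"
      using a p eps by (simp add: log_le_zero_cancel_iff)
    hence "- real_of_int i + log 2 eps \<le> 0" using p eps by (simp add: log_mult)
    hence i0: "k0 \<le> i" unfolding k0_def by linarith
    have jb2: "real j \<le> 2 / eps^2" using jb by simp
    have "w \<le> 2 powr (- real_of_int i) * eps * (2 / eps^2)"
      using wy y jb2 p eps by (smt (verit) mult_left_mono mult_pos_pos)
    also have "\<dots> = 2 powr (- real_of_int i) * 2 / eps" using eps by (simp add: power2_eq_square field_simps)
    finally have "w * eps / 2 \<le> 2 powr (- real_of_int i)" using eps by (simp add: field_simps)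
    hence "log 2 (w * eps / 2) \<le> log 2 (2 powr (- real_of_int i))"
      using w eps by (subst log_le_cancel_iff) auto
    hence "log 2 (w * eps / 2) \<le> - real_of_int i" by simp
    hence i1: "i \<le> i1" unfolding i1_def by linarith
    have "int j \<le> \<lfloor>2 / eps^2\<rfloor>" using jb2 by (simp add: le_floor_iff)
    hence "j \<le> J" unfolding J_def by linarith
    thus "y \<in> (\<lambda>(i,j). 2 powr (- real_of_int i) * eps * real j) ` ({k0..i1} \<times> {..J})"
      using y i0 i1 by force
  qed
  thus ?thesis by (rule finite_subset) auto
qed

lemma greatest_props:
  assumes eps: "0 < eps" and w: "w \<in> grid eps" "0 < w" "w \<le> x"
  shows "(GREATEST y. y \<in> grid eps \<and> y \<le> x) \<in> grid eps \<and>
         (GREATEST y. y \<in> grid eps \<and> y \<le> x) \<le> x \<and>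
         w \<le> (GREATEST y. y \<in> grid eps \<and> y \<le> x)"
proof -
  define T where "T = {y \<in> grid eps. w \<le> y \<and> y \<le> x}"
  have fT: "finite T" unfolding T_def
    by (rule finite_subset[OF _ grid_finite[OF eps w(2)]]) auto
  have wT: "w \<in> T" unfolding T_def using w by auto
  define M where "M = Max T"
  have MT: "M \<in> T" unfolding M_def using fT wT by (intro Max_in) auto
  have "(GREATEST y. y \<in> grid eps \<and> y \<le> x) = M"
  proof (rule Greatest_equality)
    show "M \<in> grid eps \<and> M \<le> x" using MT unfolding T_def by auto
  next
    fix y assume y: "y \<in> grid eps \<and> y \<le> x"
    show "y \<le> M"
    proof (cases "w \<le> y")
      case True
      hence "y \<in> T" unfolding T_def using y by auto
      thus ?thesis unfolding M_def using fT by auto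
    next
      case False
      thus ?thesis using MT unfolding T_def by auto
    qed
  qed
  thus ?thesis using MT unfolding T_def by auto
qed

lemma witness_lt1:
  fixes E :: nat
  assumes E: "E \<ge> 1" and eps: "eps = 1 / real E" and x: "0 < x" "x < 1"
  shows "\<exists>w. w \<in> grid eps \<and> 0 < w \<and> w \<le> x \<and> x / 2 < w"
proof -
  define l where "l = log 2 x"
  define w where "w = 2 powr real_of_int \<lfloor>l\<rfloor>"
  have "l < 0" unfolding l_def using x by simp
  hence fl: "\<lfloor>l\<rfloor> \<le> -1" by linarith
  have "w \<le> 2 powr l" unfolding w_def by (intro powr_mono) auto
  also have "\<dots> = x" unfolding l_def using x by simp
  finally have wx: "w \<le> x" .
  have "x / 2 = 2 powr (l - 1)" unfolding l_def using x by (simp add: powr_diff)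
  also have "\<dots> < w" unfolding w_def by (intro powr_less_mono) linarith+
  finally have xw: "x / 2 < w" .
  have "w \<le> 2 powr (-1)" unfolding w_def using fl by (intro powr_mono) auto
  hence w1: "w < 1" by simp
  have wg: "w \<in> grid eps"
  proof (rule grid_memI[where i = "- \<lfloor>l\<rfloor>" and j = E])
    show "w = 2 powr (- real_of_int (- \<lfloor>l\<rfloor>)) * eps * real E"
      unfolding w_def eps using E by simp
    show "1 \<le> E" by fact
    have "real E * 1 \<le> real E * real E" using E by (intro mult_left_mono) auto
    hence "real E \<le> 2 * real E ^ 2 - 1" using E unfolding power2_eq_square by linarith
    thus "real E \<le> 2 / eps^2 - 1" unfolding eps by (simp add: power_divide)
    show "0 < w" unfolding w_def by simp
    show "w < 1" by fact
  qed
  show ?thesis using wg wx xw w_def by (intro exI[of _ w]) auto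
qed

lemma witness_1:
  fixes E :: nat
  assumes E: "E \<ge> 4" and eps: "eps = 1 / real E"
  shows "\<exists>w. w \<in> grid eps \<and> 0 < w \<and> w \<le> 1 \<and> 1 / 2 < w"
proof -
  have e: "eps \<le> 1/4" "0 < eps" unfolding eps using E by (auto simp: field_simps)
  have wg: "1 - eps \<in> grid eps"
  proof (rule grid_memI[where i = 0 and j = "E - 1"])
    show "1 - eps = 2 powr (- real_of_int 0) * eps * real (E - 1)"
      unfolding eps using E by (simp add: of_nat_diff field_simps)
    show "1 \<le> E - 1" using E by simp
    have "real E * 1 \<le> real E * real E" using E by (intro mult_left_mono) auto
    hence "real E - 1 \<le> 2 * real E ^ 2 - 1" using E unfolding power2_eq_square by linarith
    thus "real (E - 1) \<le> 2 / eps^2 - 1" unfolding eps using E by (simp add: power_divide of_nat_diff)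
    show "0 < 1 - eps" "1 - eps < 1" using e by auto
  qed
  show ?thesis using wg e by (intro exI[of _ "1 - eps"]) auto
qed

lemma halving:
  fixes E :: nat
  assumes E: "E \<ge> 4" and eps: "eps = 1 / real E" and x: "0 < x" "x \<le> 1"
  shows "(GREATEST y. y \<in> grid eps \<and> y \<le> x) \<le> x \<and>
         x - (GREATEST y. y \<in> grid eps \<and> y \<le> x) < x / 2"
proof -
  have e: "0 < eps" unfolding eps using E by auto
  obtain w where w: "w \<in> grid eps" "0 < w" "w \<le> x" "x / 2 < w"
  proof (cases "x < 1")
    case True thus ?thesis using witness_lt1[of E eps x] E eps x that by auto
  next
    case False hence "x = 1" using x by auto
    thus ?thesis using witness_1[OF E eps] that by auto
  qed
  from greatest_props[OF e w(1,2,3)] w(4) show ?thesis by auto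
qed


lemma lenA:
  fixes G :: "real set" and tau :: real
  assumes H0: "\<forall>x. tau \<le> x \<longrightarrow> x \<le> 1 \<longrightarrow>
     (GREATEST y. y \<in> G \<and> y \<le> x) \<le> x \<and> x - (GREATEST y. y \<in> G \<and> y \<le> x) < x / 2"
    and tau: "0 < tau"
  shows "rounding G tau x ys \<Longrightarrow> x \<le> 1 \<Longrightarrow> x < tau * 2^N \<Longrightarrow> length ys \<le> N + 1"
proof (induction arbitrary: N rule: rounding.induct)
  case (stop x) thus ?case by simp
next
  case (step x y ys)
  have h: "x - y < x / 2" using H0[rule_format, OF step(1) step(5)] unfolding step(2)[symmetric] by (rule conjunct2)
  show ?case
  proof (cases N)
    case 0 thus ?thesis using step(1) step(6) by simp
  next
    case (Suc M)
    have "tau * 2 ^ N = 2 * (tau * 2 ^ M)" using Suc by simp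
    hence a: "x - y < tau * 2^M" using h step(6) by linarith
    have "x - y \<le> 1" using h step(1) step(5) tau by linarith
    from this a have "length ys \<le> M + 1" by (rule step.IH)
    thus ?thesis using Suc by simp
  qed
qed

lemma lenB:
  fixes G :: "real set" and tau :: real
  assumes H0: "\<forall>x. tau \<le> x \<longrightarrow> x \<le> 1 \<longrightarrow>
     (GREATEST y. y \<in> G \<and> y \<le> x) \<le> x \<and> x - (GREATEST y. y \<in> G \<and> y \<le> x) < x / 2"
    and tau: "0 < tau"
  assumes r: "rounding G tau x ys" and x1: "x \<le> 1" and xN: "x \<le> tau * 2^N" and N: "1 \<le> N"
  shows "length ys \<le> N + 1"
  using r
proof (cases rule: rounding.cases)
  case stop thus ?thesis by simp
next
  case (step y ys')
  obtain M where M: "N = Suc M" using N by (cases N) auto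
  have h: "x - y < x / 2" using H0[rule_format, OF step(2) x1] unfolding step(3)[symmetric] by (rule conjunct2)
  have "tau * 2 ^ N = 2 * (tau * 2 ^ M)" using M by simp
  hence a: "x - y < tau * 2^M" using h xN by linarith
  have "x - y \<le> 1" using h step(2) x1 tau by linarith
  hence "length ys' \<le> M + 1" using lenA[OF H0 tau step(4) _ a] by blast
  thus ?thesis using step M by simp
qed

lemma exists_rounding:
  fixes G :: "real set" and tau :: real
  assumes H0: "\<forall>x. tau \<le> x \<longrightarrow> x \<le> 1 \<longrightarrow>
     (GREATEST y. y \<in> G \<and> y \<le> x) \<le> x \<and> x - (GREATEST y. y \<in> G \<and> y \<le> x) < x / 2"
    and tau: "0 < tau"
  shows "x \<le> 1 \<Longrightarrow> x < tau * 2^N \<Longrightarrow> \<exists>ys. rounding G tau x ys"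
proof (induction N arbitrary: x)
  case 0
  thus ?case using rounding.stop by force
next
  case (Suc N)
  show ?case
  proof (cases "x < tau")
    case True thus ?thesis using rounding.stop by blast
  next
    case False
    define y where "y = (GREATEST y. y \<in> G \<and> y \<le> x)"
    have h: "x - y < x / 2" using H0[rule_format, of x] False Suc(2) unfolding y_def by simp
    have "x - y < tau * 2^N" using h Suc(3) by simp
    moreover have "x - y \<le> 1" using h False Suc(2) tau by linarith
    ultimately obtain ys where "rounding G tau (x - y) ys" using Suc(1) by blast
    thus ?thesis using rounding.step[of tau x y G ys] False y_def by auto
  qed
qed


lemma sum_bound:
  fixes g :: "real \<Rightarrow> nat"
  shows "(\<forall>x \<in># p. g x \<le> B) \<Longrightarrow> (\<Sum>x \<in># p. g x) \<le> size p * B"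
  by (induction p) auto

theorem claim5:
  fixes m n :: nat and eps tau :: real and p :: "real multiset"
  assumes "m \<ge> 2"
    and "\<exists>k::int. eps = 2 powr real_of_int k"
    and "eps \<le> 1 / (2 ^ (3 * m) * (4 * real m))"
    and "0 < tau" and "tau < 1"
    and "\<forall>x \<in># p. 0 \<le> x \<and> x \<le> 1"
    and "sum_mset p = 1"
    and "size p \<le> n"
  shows "(\<forall>x \<in># p. \<exists>ys. rounding (grid eps) tau x ys)
       \<and> (\<forall>f. (\<forall>x \<in># p. rounding (grid eps) tau x (f x)) \<longrightarrow>
            int (size (\<Sum>x \<in># p. mset (f x))) \<le> int n * \<lceil>1 + log 2 (1 / tau)\<rceil>)"
proof -
  obtain k :: int where k: "eps = 2 powr real_of_int k" using assms(2) by blast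
  have "(1::real) \<le> 2 ^ (3 * m)" by simp
  moreover have "(8::real) \<le> 4 * real m" using assms(1) by simp
  ultimately have "(1::real) * 8 \<le> 2 ^ (3 * m) * (4 * real m)"
    by (intro mult_mono) auto
  hence "1 / (2 ^ (3 * m) * (4 * real m)) \<le> (1::real) / 8"
    by (intro divide_left_mono) auto
  hence e8: "eps \<le> 1/8" using assms(3) by linarith
  have km: "k \<le> -3"
  proof (rule ccontr)
    assume "\<not> k \<le> -3"
    hence "2 powr (-2) \<le> eps" unfolding k by (intro powr_mono) auto
    moreover have "2 powr (-2::real) = 1/4" by (simp add: powr_minus)
    ultimately show False using e8 by simp
  qed
  define E :: nat where "E = 2 ^ nat (-k)"
  have "(2::nat)^2 \<le> 2 ^ nat (-k)" using km by (intro power_increasing) auto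
  hence E4: "E \<ge> 4" unfolding E_def by simp
  have "eps = 1 / 2 powr real_of_int (-k)" unfolding k by (simp add: powr_minus divide_inverse)
  also have "2 powr real_of_int (-k) = real E" unfolding E_def using km
    by (simp add: powr_realpow[symmetric])
  finally have epsE: "eps = 1 / real E" .
  have H: "\<forall>x. tau \<le> x \<longrightarrow> x \<le> 1 \<longrightarrow>
     (GREATEST y. y \<in> grid eps \<and> y \<le> x) \<le> x \<and> x - (GREATEST y. y \<in> grid eps \<and> y \<le> x) < x / 2"
    using halving[OF E4 epsE] assms(4) by force
  define l where "l = log 2 (1 / tau)"
  have l0: "0 < l" unfolding l_def using assms(4,5) by simp
  define L where "L = nat \<lceil>l\<rceil>"
  have L1: "1 \<le> L" unfolding L_def using l0 by linarith
  have "1 / tau = 2 powr l" unfolding l_def using assms(4) by simp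
  also have "\<dots> \<le> 2 powr real L" unfolding L_def using l0 by (intro powr_mono) auto
  also have "\<dots> = 2 ^ L" by (simp add: powr_realpow)
  finally have "1 \<le> tau * 2 ^ L" using assms(4) by (simp add: field_simps)
  hence tL: "1 < tau * 2 ^ (L + 1)" using assms(4) by simp
  have c1: "\<lceil>1 + l\<rceil> = \<lceil>l\<rceil> + 1" by (subst add.commute) (rule ceiling_add_one)
  have c2: "int L = \<lceil>l\<rceil>" unfolding L_def using l0 by simp
  have ceil: "\<lceil>1 + log 2 (1 / tau)\<rceil> = int L + 1" unfolding l_def[symmetric] c1 c2 ..
  show ?thesis
  proof (intro conjI allI impI ballI)
    fix x assume "x \<in># p"
    hence "x \<le> 1" using assms(6) by auto
    moreover have "x < tau * 2 ^ (L + 1)" using \<open>x \<le> 1\<close> tL by linarith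
    ultimately show "\<exists>ys. rounding (grid eps) tau x ys"
      by (rule exists_rounding[of tau "grid eps" x "L+1", OF H assms(4)])
  next
    fix f assume f: "\<forall>x\<in>#p. rounding (grid eps) tau x (f x)"
    have "\<forall>x \<in># p. length (f x) \<le> L + 1"
    proof
      fix x assume "x \<in># p"
      hence "x \<le> 1" "rounding (grid eps) tau x (f x)" using assms(6) f by auto
      thus "length (f x) \<le> L + 1" using lenB[of tau "grid eps" x "f x" L, OF H assms(4)] L1 \<open>1 \<le> tau * 2 ^ L\<close>
        by linarith
    qed
    hence "(\<Sum>x \<in># p. length (f x)) \<le> size p * (L + 1)" by (rule sum_bound)
    also have "\<dots> \<le> n * (L + 1)" using assms(8) by (rule mult_right_mono) simp
    finally have "size (\<Sum>x \<in># p. mset (f x)) \<le> n * (L + 1)" by (simp add: multiset.map_comp comp_def)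
    hence "int (size (\<Sum>x \<in># p. mset (f x))) \<le> int (n * (L + 1))" by linarith
    thus "int (size (\<Sum>x \<in># p. mset (f x))) \<le> int n * \<lceil>1 + log 2 (1 / tau)\<rceil>"
      unfolding ceil by (simp only: of_nat_mult of_nat_add of_nat_1)
  qed
qed

end
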